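(* For a sample $X_1,\dots,X_n$ over the finite alphabet $A$ and arbitrary constants $0<c_1<c_2$, we have $\hat\tau_{\mathrm{BIC}}(X_1^n;c_1)\succeq\hat\tau_{\mathrm{BIC}}(X_1^n;c_2)$, where $\hat\tau_{\mathrm{BIC}}(X_1^n;c)=\arg\max_{\tau\in\mathcal{T}_n}\{\log L_\tau(X_1^n)-c\cdot\mathrm{df}(\tau)\cdot\log n\}$.
   Context: Strings: for a finite alphabet $A$, $w_m^n=(w_m,\dots,w_n)$, with length $\ell(w_m^n)=n-m+1$. A string $s_{-j}^{-1}$ is a suffix of $w_{-k}^{-1}$, written $s\preceq w$, if $j\le k$ and $s_{-i}=w_{-i}$ for $i=1,\dots,j$. An irreducible tree is a finite set $\tau$ of finite strings such that no element of $\tau$ has a proper suffix in $\tau$, and no element of $\tau$ can be replaced by a proper suffix without violating this property. Its height is $\ell(\tau)=\max\{\ell(w):w\in\tau\}$. Partial order on trees: $\tau\preceq\tau'$ (equivalently $\tau'\succeq\tau$) if for every $v\in\tau'$ there is $w\in\tau$ with $w\preceq v$. Fix a function $d(n)\to\infty$. For a string $w_{-j}^0$ with $j\le d(n)$, $N_n(w_{-j}^0)=\sum_{t=d(n)+1}^n \mathbf 1\{X_{t-j}^t=w_{-j}^0\}$. For $w$ with $\sum_{b\in A}N_n(wb)>0$, $\hat p_n(a|w)=N_n(wa)/\sum_{b\in A}N_n(wb)$ ($wa$ is concatenation). The likelihood of a tree $\tau$ is $L_\tau(X_1^n)=\prod_{w\in\tau}\prod_{a\in A}\hat p_n(a|w)^{N_n(wa)}$.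 $\mathcal{T}_n$ is the set of irreducible trees $\tau$ with $\ell(\tau)\le d(n)$, with $\sum_b N_n(wb)>0$ for all $w\in\tau$, and such that every string $u$ with $\sum_b N_n(ub)>0$ has a suffix in $\tau$ or is a suffix (proper or not) of an element of $\tau$. Degrees of freedom: given an incidence function $\chi$ from finite strings to $\{0,1\}$ (with $\chi(wa)=0$ meaning the transition from $w$ to $a$ is not allowed), consistent in the sense that $\chi(w_{-j}^{-1}a)=0$ implies $\chi(w_{-k}^{-1}a)=0$ for all $k\ge j$, set $\mathrm{df}(\tau)=\sum_{w\in\tau}\sum_{a\in A}\chi(wa)$ (without restrictions $\mathrm{df}(\tau)=(|A|-1)|\tau|$). *)

theory Defs
  imports Complex_Main "HOL-Library.Sublist"
begin

text \<open>Strings w_{-k}^{-1} are lists [w_{-k}, ..., w_{-1}]; the paper's suffix relation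
  is then exactly list suffix (HOL-Library.Sublist).  The sample is X :: nat => 'a,
  of which only X 1, ..., X n are used.  The alphabet A is the finite type 'a.\<close>

definition suffix_free :: "'a list set \<Rightarrow> bool" where
  "suffix_free \<tau> \<longleftrightarrow> (\<forall>w\<in>\<tau>. \<not> (\<exists>v\<in>\<tau>. strict_suffix v w))"

definition irreducible_tree :: "'a list set \<Rightarrow> bool" where
  "irreducible_tree \<tau> \<longleftrightarrow> finite \<tau> \<and> suffix_free \<tau> \<and>
     (\<forall>w\<in>\<tau>. \<forall>s. strict_suffix s w \<longrightarrow> \<not> suffix_free (insert s (\<tau> - {w})))"

definition tree_height :: "'a list set \<Rightarrow> nat" where
  "tree_height \<tau> = Max (insert 0 (length ` \<tau>))"

definition tree_le :: "'a list set \<Rightarrow> 'a list set \<Rightarrow> bool" where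
  "tree_le \<tau> \<tau>' \<longleftrightarrow> (\<forall>v\<in>\<tau>'. \<exists>w\<in>\<tau>. suffix w v)"

text \<open>N_n(w_{-j}^0) for a string w of length j+1 (used only when j <= d n).\<close>
definition Ncount :: "(nat \<Rightarrow> 'a) \<Rightarrow> (nat \<Rightarrow> nat) \<Rightarrow> nat \<Rightarrow> 'a list \<Rightarrow> nat" where
  "Ncount X d n w = card {t \<in> {d n + 1..n}. \<forall>i<length w. X (t + 1 - length w + i) = w ! i}"

definition Ntot :: "(nat \<Rightarrow> 'a::finite) \<Rightarrow> (nat \<Rightarrow> nat) \<Rightarrow> nat \<Rightarrow> 'a list \<Rightarrow> nat" where
  "Ntot X d n w = (\<Sum>b\<in>UNIV. Ncount X d n (w @ [b]))"

definition phat :: "(nat \<Rightarrow> 'a::finite) \<Rightarrow> (nat \<Rightarrow> nat) \<Rightarrow> nat \<Rightarrow> 'a \<Rightarrow> 'a list \<Rightarrow> real" where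
  "phat X d n a w = real (Ncount X d n (w @ [a])) / real (Ntot X d n w)"

definition likelihood :: "(nat \<Rightarrow> 'a::finite) \<Rightarrow> (nat \<Rightarrow> nat) \<Rightarrow> nat \<Rightarrow> 'a list set \<Rightarrow> real" where
  "likelihood X d n \<tau> = (\<Prod>w\<in>\<tau>. \<Prod>a\<in>UNIV. phat X d n a w ^ Ncount X d n (w @ [a]))"

definition cand_trees :: "(nat \<Rightarrow> 'a::finite) \<Rightarrow> (nat \<Rightarrow> nat) \<Rightarrow> nat \<Rightarrow> 'a list set set" where
  "cand_trees X d n = {\<tau>. irreducible_tree \<tau> \<and> tree_height \<tau> \<le> d n \<and>
      (\<forall>w\<in>\<tau>. Ntot X d n w > 0) \<and>
      (\<forall>u. length u \<le> d n \<longrightarrow> Ntot X d n u > 0 \<longrightarrow>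
           (\<exists>w\<in>\<tau>. suffix w u) \<or> (\<exists>w\<in>\<tau>. suffix u w))}"

text \<open>Incidence function: chi (w @ [a]) = False means the transition w -> a is not allowed.\<close>
definition consistent_incidence :: "('a list \<Rightarrow> bool) \<Rightarrow> bool" where
  "consistent_incidence chi \<longleftrightarrow>
     (\<forall>s w a. suffix s w \<longrightarrow> \<not> chi (s @ [a]) \<longrightarrow> \<not> chi (w @ [a]))"

definition df :: "('a::finite list \<Rightarrow> bool) \<Rightarrow> 'a list set \<Rightarrow> nat" where
  "df chi \<tau> = (\<Sum>w\<in>\<tau>. card {a. chi (w @ [a])})"

definition bic_crit :: "(nat \<Rightarrow> 'a::finite) \<Rightarrow> (nat \<Rightarrow> nat) \<Rightarrow> ('a list \<Rightarrow> bool) \<Rightarrow> nat \<Rightarrow> real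
     \<Rightarrow> 'a list set \<Rightarrow> real" where
  "bic_crit X d chi n c \<tau> = ln (likelihood X d n \<tau>) - c * real (df chi \<tau>) * ln (real n)"

definition is_bic_max :: "(nat \<Rightarrow> 'a::finite) \<Rightarrow> (nat \<Rightarrow> nat) \<Rightarrow> ('a list \<Rightarrow> bool) \<Rightarrow> nat \<Rightarrow> real
     \<Rightarrow> 'a list set \<Rightarrow> bool" where
  "is_bic_max X d chi n c \<tau> \<longleftrightarrow> \<tau> \<in> cand_trees X d n \<and>
     (\<forall>\<tau>'\<in>cand_trees X d n. bic_crit X d chi n c \<tau>' \<le> bic_crit X d chi n c \<tau>)"

definition tau_bic :: "(nat \<Rightarrow> 'a::finite) \<Rightarrow> (nat \<Rightarrow> nat) \<Rightarrow> ('a list \<Rightarrow> bool) \<Rightarrow> nat \<Rightarrow> real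
     \<Rightarrow> 'a list set" where
  "tau_bic X d chi n c = (THE \<tau>. is_bic_max X d chi n c \<tau>)"

end

theory Submission
  imports Defs
begin


lemma height_le:
  assumes "finite \<tau>" shows "tree_height \<tau> \<le> k \<longleftrightarrow> (\<forall>w\<in>\<tau>. length w \<le> k)"
  using assms unfolding tree_height_def by auto

lemma irred_ext:
  assumes "suffix_free \<tau>" "irreducible_tree \<tau>" "w \<in> \<tau>" "strict_suffix s w"
  shows "\<exists>y\<in>\<tau>. y \<noteq> w \<and> strict_suffix s y"
proof -
  have "\<not> suffix_free (insert s (\<tau> - {w}))" using assms unfolding irreducible_tree_def by blast
  then obtain a b where ab: "a \<in> insert s (\<tau> - {w})" "b \<in> insert s (\<tau> - {w})" "strict_suffix b a"
    unfolding suffix_free_def by blast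
  show ?thesis
  proof (cases "a = s")
    case True
    then have "b \<noteq> s" using ab(3) by auto
    then have "b \<in> \<tau>" using ab by auto
    moreover have "strict_suffix b w" using ab(3) True assms(4) suffix_order.less_trans by blast
    ultimately show ?thesis using assms(1,3) unfolding suffix_free_def by blast
  next
    case False
    then have a: "a \<in> \<tau>" "a \<noteq> w" using ab by auto
    show ?thesis
    proof (cases "b = s")
      case True then show ?thesis using a ab by blast
    next
      case False
      then have "b \<in> \<tau>" using ab by auto
      then show ?thesis using a ab assms(1) unfolding suffix_free_def by blast
    qed
  qed
qed

lemma irred_intro:
  assumes "finite \<tau>" "suffix_free \<tau>"
    and "\<And>w s. w \<in> \<tau> \<Longrightarrow> strict_suffix s w \<Longrightarrow> \<exists>y\<in>\<tau>. y \<noteq> w \<and> strict_suffix s y"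
  shows "irreducible_tree \<tau>"
  unfolding irreducible_tree_def
proof (intro conjI ballI allI impI assms(1,2))
  fix w s assume "w \<in> \<tau>" "strict_suffix s w"
  then obtain y where "y \<in> \<tau>" "y \<noteq> w" "strict_suffix s y" using assms(3) by blast
  then show "\<not> suffix_free (insert s (\<tau> - {w}))" unfolding suffix_free_def by blast
qed

definition "candP X d n \<tau> \<longleftrightarrow> finite \<tau> \<and> suffix_free \<tau> \<and> irreducible_tree \<tau> \<and>
   (\<forall>w\<in>\<tau>. length w \<le> d n \<and> Ntot X d n w > 0) \<and>
   (\<forall>u. length u \<le> d n \<longrightarrow> Ntot X d n u > 0 \<longrightarrow> (\<exists>w\<in>\<tau>. suffix w u) \<or> (\<exists>w\<in>\<tau>. suffix u w))"

lemma cand_iff: "\<tau> \<in> cand_trees X d n \<longleftrightarrow> candP X d n \<tau>"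
  unfolding cand_trees_def candP_def irreducible_tree_def
  by (auto simp: height_le)

definition joinT :: "'a list set \<Rightarrow> 'a list set \<Rightarrow> 'a list set" where
  "joinT t1 t2 = {w\<in>t1. \<exists>v\<in>t2. suffix v w} \<union> {w\<in>t2. \<exists>v\<in>t1. strict_suffix v w}"
definition meetT :: "'a list set \<Rightarrow> 'a list set \<Rightarrow> 'a list set" where
  "meetT t1 t2 = {w\<in>t1. \<exists>v\<in>t2. suffix w v} \<union> {w\<in>t2. \<exists>v\<in>t1. strict_suffix w v}"

lemma sf: "suffix_free t \<Longrightarrow> v \<in> t \<Longrightarrow> w \<in> t \<Longrightarrow> strict_suffix v w \<Longrightarrow> False"
  unfolding suffix_free_def by blast

lemma rel: assumes "candP X d n t2" "w \<in> t1" "candP X d n t1"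
  shows "\<exists>v\<in>t2. suffix v w \<or> suffix w v"
  using assms unfolding candP_def by blast

context
  fixes X :: "nat \<Rightarrow> 'a::finite" and d n and t1 t2 :: "'a list set"
  assumes c1: "candP X d n t1" and c2: "candP X d n t2"
begin

lemma sf1: "v \<in> t1 \<Longrightarrow> w \<in> t1 \<Longrightarrow> strict_suffix v w \<Longrightarrow> False"
  using c1 sf unfolding candP_def by blast
lemma sf2: "v \<in> t2 \<Longrightarrow> w \<in> t2 \<Longrightarrow> strict_suffix v w \<Longrightarrow> False"
  using c2 sf unfolding candP_def by blast
lemma rel12: "w \<in> t1 \<Longrightarrow> \<exists>v\<in>t2. strict_suffix v w \<or> v = w \<or> strict_suffix w v"
  using rel[OF c2 _ c1] suffix_order.order_iff_strict by metis
lemma rel21: "w \<in> t2 \<Longrightarrow> \<exists>v\<in>t1. strict_suffix v w \<or> v = w \<or> strict_suffix w v"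
  using rel[OF c1 _ c2] suffix_order.order_iff_strict by metis

lemmas st = suffix_order.less_trans suffix_order.le_less_trans suffix_order.less_le_trans
   suffix_order.order_iff_strict

lemma JM_union: "joinT t1 t2 \<union> meetT t1 t2 = t1 \<union> t2"
proof -
  have "w \<in> joinT t1 t2 \<union> meetT t1 t2" if w1: "w \<in> t1" for w
  proof -
    obtain v where "v\<in>t2" "strict_suffix v w \<or> v = w \<or> strict_suffix w v" using rel12[OF w1] by blast
    then show ?thesis using w1 unfolding joinT_def meetT_def strict_suffix_def by blast
  qed
  moreover have "w \<in> joinT t1 t2 \<union> meetT t1 t2" if w2: "w \<in> t2" for w
  proof -
    obtain v where "v\<in>t1" "strict_suffix v w \<or> v = w \<or> strict_suffix w v" using rel21[OF w2] by blast
    then show ?thesis using w2 unfolding joinT_def meetT_def strict_suffix_def by blast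
  qed
  ultimately show ?thesis unfolding joinT_def meetT_def by auto
qed

lemma JM_inter: "joinT t1 t2 \<inter> meetT t1 t2 = t1 \<inter> t2"
proof -
  have "w \<in> t1 \<inter> t2" if J: "w \<in> joinT t1 t2" and M: "w \<in> meetT t1 t2" for w
  proof (cases "w \<in> t1")
    case True
    show ?thesis
    proof (cases "w \<in> t2")
      case False
      then obtain v where v: "v \<in> t2" "suffix v w" using J True unfolding joinT_def by blast
      obtain v' where v': "v' \<in> t2" "suffix w v'" using M False unfolding meetT_def by blast
      have "suffix v v'" using v v' suffix_order.trans by blast
      then have "v = v'" using sf2 v v' unfolding strict_suffix_def by blast
      then have "w = v" using v v' suffix_order.antisym by blast
      then show ?thesis using v False by blast
    qed (use True in auto)
  next
    case False
    then have w2: "w \<in> t2" using J unfolding joinT_def by blast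
    obtain v where v: "v \<in> t1" "strict_suffix v w" using J False unfolding joinT_def by blast
    obtain u where u: "u \<in> t1" "strict_suffix w u" using M False unfolding meetT_def by blast
    have "strict_suffix v u" using u v suffix_order.less_trans by blast
    then show ?thesis using sf1 u v by blast
  qed
  then show ?thesis unfolding joinT_def meetT_def by auto
qed

lemma cov1: "length u \<le> d n \<Longrightarrow> Ntot X d n u > 0 \<Longrightarrow> \<exists>w\<in>t1. suffix w u \<or> suffix u w"
  using c1 unfolding candP_def by blast
lemma cov2: "length u \<le> d n \<Longrightarrow> Ntot X d n u > 0 \<Longrightarrow> \<exists>w\<in>t2. suffix w u \<or> suffix u w"
  using c2 unfolding candP_def by blast
lemma ir1: "w \<in> t1 \<Longrightarrow> strict_suffix s w \<Longrightarrow> \<exists>y\<in>t1. y \<noteq> w \<and> strict_suffix s y"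
  using c1 irred_ext unfolding candP_def by blast
lemma ir2: "w \<in> t2 \<Longrightarrow> strict_suffix s w \<Longrightarrow> \<exists>y\<in>t2. y \<noteq> w \<and> strict_suffix s y"
  using c2 irred_ext unfolding candP_def by blast

lemma J_sf: "suffix_free (joinT t1 t2)"
  unfolding suffix_free_def
proof (intro ballI notI)
  fix a assume a: "a \<in> joinT t1 t2"
  assume "\<exists>b\<in>joinT t1 t2. strict_suffix b a"
  then obtain b where b: "b \<in> joinT t1 t2" "strict_suffix b a" by blast
  have ab: "a \<in> t1 \<union> t2" "b \<in> t1 \<union> t2" using a b unfolding joinT_def by auto
  show False
  proof (cases "a \<in> t1 \<and> b \<in> t1 \<or> a \<in> t2 \<and> b \<in> t2")
    case True then show ?thesis using sf1 sf2 b by blast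
  next
    case False
    then consider "a \<in> t1" "a \<notin> t2" "b \<in> t2" "b \<notin> t1" | "a \<in> t2" "a \<notin> t1" "b \<in> t1" "b \<notin> t2"
      using ab by blast
    then show ?thesis
    proof cases
      case 1
      obtain u where u: "u \<in> t2" "suffix u a" using a 1 unfolding joinT_def by blast
      obtain v where v: "v \<in> t1" "strict_suffix v b" using b 1 unfolding joinT_def by blast
      show False
      proof (cases "u = b")
        case True
        then have "strict_suffix v a" using v u suffix_order.less_le_trans by blast
        then show False using sf1 v 1 by blast
      next
        case False
        have "suffix u b \<or> suffix b u" using u b suffix_same_cases unfolding strict_suffix_def by blast
        then show False using False sf2 u 1 unfolding strict_suffix_def by blast
      qed
    next
      case 2
      obtain v where v: "v \<in> t1" "strict_suffix v a" using a 2 unfolding joinT_def by blast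
      obtain u where u: "u \<in> t2" "suffix u b" using b 2 unfolding joinT_def by blast
      have "strict_suffix u a" using u b suffix_order.le_less_trans by blast
      then show False using sf2 u 2 by blast
    qed
  qed
qed

lemma M_sf: "suffix_free (meetT t1 t2)"
  unfolding suffix_free_def
proof (intro ballI notI)
  fix a assume a: "a \<in> meetT t1 t2"
  assume "\<exists>b\<in>meetT t1 t2. strict_suffix b a"
  then obtain b where b: "b \<in> meetT t1 t2" "strict_suffix b a" by blast
  have ab: "a \<in> t1 \<union> t2" "b \<in> t1 \<union> t2" using a b unfolding meetT_def by auto
  show False
  proof (cases "a \<in> t1 \<and> b \<in> t1 \<or> a \<in> t2 \<and> b \<in> t2")
    case True then show ?thesis using sf1 sf2 b by blast
  next
    case False
    then consider "a \<in> t1" "a \<notin> t2" "b \<in> t2" "b \<notin> t1" | "a \<in> t2" "a \<notin> t1" "b \<in> t1" "b \<notin> t2"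
      using ab by blast
    then show ?thesis
    proof cases
      case 1
      obtain v where v: "v \<in> t2" "suffix a v" using a 1 unfolding meetT_def by blast
      have "strict_suffix b v" using v b suffix_order.less_le_trans by blast
      then show False using sf2 v 1 by blast
    next
      case 2
      obtain u where u: "u \<in> t1" "strict_suffix a u" using a 2 unfolding meetT_def by blast
      have "strict_suffix b u" using u b suffix_order.less_trans by blast
      then show False using sf1 u 2 by blast
    qed
  qed
qed

lemma J_ir: "w \<in> joinT t1 t2 \<Longrightarrow> strict_suffix s w \<Longrightarrow> \<exists>y\<in>joinT t1 t2. y \<noteq> w \<and> strict_suffix s y"
proof -
  assume w: "w \<in> joinT t1 t2" and s: "strict_suffix s w"
  show ?thesis
  proof (cases "w \<in> t1")
    case True
    obtain y where y: "y \<in> t1" "y \<noteq> w" "strict_suffix s y" using ir1[OF True s] by blast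
    obtain v where v: "v \<in> t2" "strict_suffix v y \<or> v = y \<or> strict_suffix y v" using rel12[OF y(1)] by blast
    show ?thesis
    proof (cases "strict_suffix y v")
      case False
      then have "y \<in> joinT t1 t2" using v y unfolding joinT_def strict_suffix_def by blast
      then show ?thesis using y by blast
    next
      case yv: True
      have "v \<in> joinT t1 t2" using v y yv unfolding joinT_def by blast
      moreover have "v \<noteq> w" using sf1 y True yv by blast
      moreover have "strict_suffix s v" using y yv suffix_order.less_trans by blast
      ultimately show ?thesis by blast
    qed
  next
    case False
    then have w2: "w \<in> t2" using w unfolding joinT_def by blast
    obtain y where y: "y \<in> t2" "y \<noteq> w" "strict_suffix s y" using ir2[OF w2 s] by blast
    obtain z where z: "z \<in> t1" "strict_suffix z y \<or> z = y \<or> strict_suffix y z" using rel21[OF y(1)] by blast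
    show ?thesis
    proof (cases "strict_suffix y z")
      case False
      then have "y \<in> joinT t1 t2" using z y unfolding joinT_def by blast
      then show ?thesis using y by blast
    next
      case yz: True
      have "z \<in> joinT t1 t2" using z y yz unfolding joinT_def strict_suffix_def by blast
      moreover have "z \<noteq> w" using False z by blast
      moreover have "strict_suffix s z" using y yz suffix_order.less_trans by blast
      ultimately show ?thesis by blast
    qed
  qed
qed

lemma M_ir: "w \<in> meetT t1 t2 \<Longrightarrow> strict_suffix s w \<Longrightarrow> \<exists>y\<in>meetT t1 t2. y \<noteq> w \<and> strict_suffix s y"
proof -
  assume w: "w \<in> meetT t1 t2" and s: "strict_suffix s w"
  show ?thesis
  proof (cases "w \<in> t1")
    case True
    obtain v0 where v0: "v0 \<in> t2" "suffix w v0"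
    proof -
      have "\<not> (\<exists>u\<in>t1. strict_suffix w u)" using sf1 True by blast
      then show ?thesis using w that unfolding meetT_def by blast
    qed
    obtain y where y: "y \<in> t1" "y \<noteq> w" "strict_suffix s y" using ir1[OF True s] by blast
    obtain z where z: "z \<in> t2" "strict_suffix z y \<or> z = y \<or> strict_suffix y z" using rel12[OF y(1)] by blast
    show ?thesis
    proof (cases "strict_suffix z y")
      case False
      then have "y \<in> meetT t1 t2" using z y unfolding meetT_def strict_suffix_def by blast
      then show ?thesis using y by blast
    next
      case zy: True
      have zM: "z \<in> meetT t1 t2" using z y zy unfolding meetT_def by blast
      have "suffix s z \<or> suffix z s" using zy y suffix_same_cases unfolding strict_suffix_def by blast
      moreover have "\<not> suffix z s"
      proof
        assume "suffix z s"
        then have "strict_suffix z w" using s suffix_order.le_less_trans by blast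
        then have "strict_suffix z v0" using v0 suffix_order.less_le_trans by blast
        then show False using sf2 z v0 by blast
      qed
      ultimately have "strict_suffix s z" unfolding strict_suffix_def by blast
      moreover have "z \<noteq> w" using sf1 y True zy by blast
      ultimately show ?thesis using zM by blast
    qed
  next
    case False
    then have w2: "w \<in> t2" and u: "\<exists>u\<in>t1. strict_suffix w u" using w unfolding meetT_def by blast+
    obtain y where y: "y \<in> t2" "y \<noteq> w" "strict_suffix s y" using ir2[OF w2 s] by blast
    obtain z where z: "z \<in> t1" "strict_suffix z y \<or> z = y \<or> strict_suffix y z" using rel21[OF y(1)] by blast
    show ?thesis
    proof (cases "strict_suffix z y")
      case False
      then have "y \<in> meetT t1 t2" using z y unfolding meetT_def by blast
      then show ?thesis using y by blast
    next
      case zy: True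
      have zM: "z \<in> meetT t1 t2" using z y zy unfolding meetT_def strict_suffix_def by blast
      have "suffix s z \<or> suffix z s" using zy y suffix_same_cases unfolding strict_suffix_def by blast
      moreover have "\<not> suffix z s"
      proof
        assume "suffix z s"
        then have "strict_suffix z w" using s suffix_order.le_less_trans by blast
        then show False using sf1 z u suffix_order.less_trans by blast
      qed
      ultimately have "strict_suffix s z" unfolding strict_suffix_def by blast
      moreover have "z \<noteq> w" using False z by blast
      ultimately show ?thesis using zM by blast
    qed
  qed
qed

lemma J_cov: "length u \<le> d n \<Longrightarrow> Ntot X d n u > 0 \<Longrightarrow>
   (\<exists>w\<in>joinT t1 t2. suffix w u) \<or> (\<exists>w\<in>joinT t1 t2. suffix u w)"
proof -
  assume l: "length u \<le> d n" and p: "Ntot X d n u > 0"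
  obtain w1 where w1: "w1 \<in> t1" "suffix w1 u \<or> suffix u w1" using cov1[OF l p] by blast
  obtain w2 where w2: "w2 \<in> t2" "suffix w2 u \<or> suffix u w2" using cov2[OF l p] by blast
  show ?thesis
  proof (cases "w1 \<in> joinT t1 t2")
    case True then show ?thesis using w1 by blast
  next
    case notJ: False
    then have no: "\<not> (\<exists>v\<in>t2. suffix v w1)" using w1 unfolding joinT_def by blast
    show ?thesis
    proof (cases "suffix w1 u")
      case True
      have "suffix w1 w2 \<or> suffix u w2"
        using w2 True suffix_same_cases no by blast
      then have "strict_suffix w1 w2 \<and> (suffix w2 u \<or> suffix u w2)"
        using no w2 True suffix_order.trans unfolding strict_suffix_def by blast
      then have "w2 \<in> joinT t1 t2" using w1 w2 unfolding joinT_def by blast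
      then show ?thesis using w2 by blast
    next
      case False
      then have uw1: "suffix u w1" using w1 by blast
      obtain v where v: "v \<in> t2" "strict_suffix v w1 \<or> v = w1 \<or> strict_suffix w1 v" using rel12[OF w1(1)] by blast
      then have "strict_suffix w1 v" using no unfolding strict_suffix_def by blast
      then have "v \<in> joinT t1 t2" "suffix u v" using v w1 uw1 suffix_order.trans
        unfolding joinT_def strict_suffix_def by blast+
      then show ?thesis by blast
    qed
  qed
qed

lemma M_cov: "length u \<le> d n \<Longrightarrow> Ntot X d n u > 0 \<Longrightarrow>
   (\<exists>w\<in>meetT t1 t2. suffix w u) \<or> (\<exists>w\<in>meetT t1 t2. suffix u w)"
proof -
  assume l: "length u \<le> d n" and p: "Ntot X d n u > 0"
  obtain w1 where w1: "w1 \<in> t1" "suffix w1 u \<or> suffix u w1" using cov1[OF l p] by blast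
  show ?thesis
  proof (cases "w1 \<in> meetT t1 t2")
    case True then show ?thesis using w1 by blast
  next
    case False
    obtain v where v: "v \<in> t2" "strict_suffix v w1 \<or> v = w1 \<or> strict_suffix w1 v" using rel12[OF w1(1)] by blast
    then have vw: "strict_suffix v w1" using False w1 unfolding meetT_def strict_suffix_def by blast
    then have vM: "v \<in> meetT t1 t2" using v w1 unfolding meetT_def by blast
    have "suffix v u \<or> suffix u v"
      using w1(2) vw suffix_same_cases suffix_order.trans unfolding strict_suffix_def by blast
    then show ?thesis using vM by blast
  qed
qed

lemma J_cand: "candP X d n (joinT t1 t2)"
proof -
  have sub: "joinT t1 t2 \<subseteq> t1 \<union> t2" unfolding joinT_def by auto
  have "finite (t1 \<union> t2)" using c1 c2 unfolding candP_def by auto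
  then have f: "finite (joinT t1 t2)" using sub finite_subset by blast
  show ?thesis unfolding candP_def
    using f J_sf irred_intro[OF f J_sf J_ir] J_cov sub c1 c2 unfolding candP_def by blast
qed

lemma M_cand: "candP X d n (meetT t1 t2)"
proof -
  have sub: "meetT t1 t2 \<subseteq> t1 \<union> t2" unfolding meetT_def by auto
  have "finite (t1 \<union> t2)" using c1 c2 unfolding candP_def by auto
  then have f: "finite (meetT t1 t2)" using sub finite_subset by blast
  show ?thesis unfolding candP_def
    using f M_sf irred_intro[OF f M_sf M_ir] M_cov sub c1 c2 unfolding candP_def by blast
qed

end


definition win :: "(nat \<Rightarrow> 'a) \<Rightarrow> nat \<Rightarrow> nat \<Rightarrow> 'a list" where
  "win X t k = map (\<lambda>i. X (t - k + i)) [0..<k]"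

lemma length_win[simp]: "length (win X t k) = k" unfolding win_def by simp

lemma occ_iff:
  assumes "length w < t"
  shows "(\<forall>i<length (w@[a]). X (t + 1 - length (w@[a]) + i) = (w@[a]) ! i) \<longleftrightarrow>
         X t = a \<and> w = win X t (length w)"
proof -
  have eq0: "length w = L \<Longrightarrow> (w = win X t L) \<longleftrightarrow> (\<forall>i<L. X (t - L + i) = w ! i)" for L
    unfolding list_eq_iff_nth_eq by (auto simp: win_def)
  have eq: "w = win X t (length w) \<longleftrightarrow> (\<forall>i<length w. X (t - length w + i) = w ! i)"
    using eq0[of "length w"] by simp
  have "(\<forall>i<length (w@[a]). X (t + 1 - length (w@[a]) + i) = (w@[a]) ! i) \<longleftrightarrow>
     (\<forall>i<length w + 1. X (t - length w + i) = (w@[a]) ! i)" by simp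
  also have "\<dots> \<longleftrightarrow> (\<forall>i<length w. X (t - length w + i) = w ! i) \<and> X t = a"
    using assms by (auto simp: nth_append less_Suc_eq)
  finally show ?thesis using eq by blast
qed

lemma win_suffix: "k \<le> k' \<Longrightarrow> k' \<le> t \<Longrightarrow> suffix (win X t k) (win X t k')"
proof -
  assume a: "k \<le> k'" "k' \<le> t"
  have "win X t k' = win X (t - k) (k' - k) @ win X t k"
    unfolding win_def
  proof (rule nth_equalityI)
    show "length (map (\<lambda>i. X (t - k' + i)) [0..<k']) =
      length (map (\<lambda>i. X (t - k - (k' - k) + i)) [0..<k' - k] @ map (\<lambda>i. X (t - k + i)) [0..<k])"
      using a by simp
    fix i assume "i < length (map (\<lambda>i. X (t - k' + i)) [0..<k'])"
    then show "map (\<lambda>i. X (t - k' + i)) [0..<k'] ! i =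
      (map (\<lambda>i. X (t - k - (k' - k) + i)) [0..<k' - k] @ map (\<lambda>i. X (t - k + i)) [0..<k]) ! i"
      using a by (auto simp: nth_append)
  qed
  then show ?thesis unfolding suffix_def by blast
qed

lemma suffix_win: "suffix z (win X t k) \<Longrightarrow> k \<le> t \<Longrightarrow> z = win X t (length z)"
proof -
  assume s: "suffix z (win X t k)" and k: "k \<le> t"
  have l: "length z \<le> k" using suffix_length_le[OF s] by simp
  have "suffix (win X t (length z)) (win X t k)" using win_suffix[OF l k] .
  then have "suffix z (win X t (length z))" "suffix (win X t (length z)) z"
    using s suffix_length_suffix by (metis length_win order_refl)+
  then show ?thesis using suffix_order.antisym by blast
qed

definition Sset where "Sset X d n w a = {t\<in>{d n + 1..n}. X t = a \<and> w = win X t (length w)}"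

lemma Ncount_eq: "length w \<le> d n \<Longrightarrow> Ncount X d n (w@[a]) = card (Sset X d n w a)"
  unfolding Ncount_def Sset_def
  apply (rule arg_cong[where f=card])
  apply (rule Collect_cong)
  subgoal for t using occ_iff[where w=w and t=t and X=X and a=a] by auto
  done


lemma suffix_len_eq: "suffix u z \<Longrightarrow> length z \<le> length u \<Longrightarrow> u = z"
  unfolding suffix_def by auto

context
  fixes X :: "nat \<Rightarrow> 'a::finite" and d n and t1 t2 :: "'a list set"
  assumes c1: "candP X d n t1" and c2: "candP X d n t2"
begin

lemma len2: "z \<in> t2 \<Longrightarrow> length z \<le> d n" using c2 unfolding candP_def by blast
lemma len1: "z \<in> t1 \<Longrightarrow> length z \<le> d n" using c1 unfolding candP_def by blast

lemma Sset_fin: "finite (Sset X d n w a)" unfolding Sset_def by auto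

lemma group_count:
  assumes w1: "w \<in> t1" and wn2: "w \<notin> t2" and v0: "v0 \<in> t2" "strict_suffix w v0"
  shows "Ncount X d n (w@[a]) = (\<Sum>z\<in>{z\<in>t2. strict_suffix w z}. Ncount X d n (z@[a]))"
proof -
  let ?G = "{z\<in>t2. strict_suffix w z}"
  have finG: "finite ?G" using c2 unfolding candP_def by auto
  have eqU: "Sset X d n w a = (\<Union>z\<in>?G. Sset X d n z a)"
  proof (intro equalityI subsetI)
    fix t assume t: "t \<in> Sset X d n w a"
    then have tr: "d n + 1 \<le> t" "t \<le> n" "X t = a" "w = win X t (length w)" unfolding Sset_def by auto
    define u where "u = win X t (d n)"
    have lu: "length u = d n" unfolding u_def by simp
    have "t \<in> Sset X d n u a" using tr unfolding Sset_def u_def by auto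
    then have "card (Sset X d n u a) > 0" using Sset_fin card_gt_0_iff by blast
    then have "Ncount X d n (u@[a]) > 0" using Ncount_eq[of u d n X a] lu by simp
    moreover have "Ncount X d n (u@[a]) \<le> Ntot X d n u" unfolding Ntot_def
      by (rule member_le_sum) auto
    ultimately have "Ntot X d n u > 0" by simp
    then obtain z where z: "z \<in> t2" "suffix z u \<or> suffix u z" using cov2[OF c1 c2, of u] lu by auto
    have zu: "suffix z u" using z suffix_len_eq[of u z] len2[OF z(1)] lu by auto
    have zw: "z = win X t (length z)" using suffix_win[OF zu[unfolded u_def]] tr by simp
    have wu: "suffix w u" unfolding u_def using win_suffix[of "length w" "d n" t X] tr len1[OF w1]
      by simp
    have "suffix z w \<or> suffix w z" using zu wu suffix_same_cases by blast
    moreover have "\<not> suffix z w"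
    proof
      assume "suffix z w"
      then have "strict_suffix z v0" using v0 suffix_order.le_less_trans by blast
      then show False using sf2[OF c1 c2] z v0 by blast
    qed
    ultimately have "strict_suffix w z" using wn2 z unfolding strict_suffix_def by blast
    then have "z \<in> ?G" using z by blast
    moreover have "t \<in> Sset X d n z a" using tr zw unfolding Sset_def by auto
    ultimately show "t \<in> (\<Union>z\<in>?G. Sset X d n z a)" by blast
  next
    fix t assume "t \<in> (\<Union>z\<in>?G. Sset X d n z a)"
    then obtain z where z: "z \<in> ?G" "t \<in> Sset X d n z a" by blast
    then have tr: "d n + 1 \<le> t" "t \<le> n" "X t = a" "z = win X t (length z)" unfolding Sset_def by auto
    have "suffix w (win X t (length z))" using z tr unfolding strict_suffix_def by auto
    then have "w = win X t (length w)" using suffix_win tr len2 z by (metis (no_types, lifting) mem_Collect_eq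
      add_leD1 order_trans)
    then show "t \<in> Sset X d n w a" using tr unfolding Sset_def by auto
  qed
  have disj: "\<forall>z1\<in>?G. \<forall>z2\<in>?G. z1 \<noteq> z2 \<longrightarrow> Sset X d n z1 a \<inter> Sset X d n z2 a = {}"
  proof (intro ballI impI equals0I)
    fix z1 z2 t assume z: "z1 \<in> ?G" "z2 \<in> ?G" "z1 \<noteq> z2"
      and t: "t \<in> Sset X d n z1 a \<inter> Sset X d n z2 a"
    then have tr: "d n + 1 \<le> t" "z1 = win X t (length z1)" "z2 = win X t (length z2)"
      unfolding Sset_def by auto
    have l: "length z1 \<le> t" "length z2 \<le> t" using len2 z tr by fastforce+
    have "suffix z1 z2 \<or> suffix z2 z1"
      using win_suffix[of "length z1" "length z2" t X] win_suffix[of "length z2" "length z1" t X] tr l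
      by (metis nle_le)
    then show False using sf2[OF c1 c2] z unfolding strict_suffix_def by blast
  qed
  have "Ncount X d n (w@[a]) = card (\<Union>z\<in>?G. Sset X d n z a)"
    using Ncount_eq len1[OF w1] eqU by metis
  also have "\<dots> = (\<Sum>z\<in>?G. card (Sset X d n z a))"
    by (rule card_UN_disjoint[OF finG _ disj]) (simp add: Sset_fin)
  also have "\<dots> = (\<Sum>z\<in>?G. Ncount X d n (z@[a]))"
    by (rule sum.cong) (auto simp: Ncount_eq len2)
  finally show ?thesis .
qed

end



lemma prod_supp:
  fixes q :: "'a::finite \<Rightarrow> real" and n :: "'a \<Rightarrow> nat"
  shows "(\<Prod>a\<in>UNIV. q a ^ n a) = (\<Prod>a\<in>{a. n a > 0}. q a ^ n a)"
  by (rule prod.mono_neutral_right) auto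

lemma gibbs:
  fixes n :: "'a::finite \<Rightarrow> nat" and q :: "'a \<Rightarrow> real"
  assumes q0: "\<And>a. q a \<ge> 0" and q1: "sum q UNIV \<le> 1"
  shows "(\<Prod>a\<in>UNIV. q a ^ n a) \<le> (\<Prod>a\<in>UNIV. (real (n a) / real (sum n UNIV)) ^ n a)"
proof -
  define B where "B = {a. n a > 0}"
  define N where "N = real (sum n UNIV)"
  have RHSnn: "0 \<le> (\<Prod>a\<in>UNIV. (real (n a) / real (sum n UNIV)) ^ n a)"
    by (intro prod_nonneg zero_le_power divide_nonneg_nonneg) (auto intro: sum_nonneg)
  show ?thesis
  proof (cases "\<exists>a\<in>B. q a = 0")
    case True
    then obtain a where a: "a \<in> B" "q a = 0" by blast
    have "(\<Prod>a\<in>UNIV. q a ^ n a) = 0"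
      by (rule prod_zero) (use a B_def in auto)
    then show ?thesis using RHSnn by linarith
  next
    case False
    then have qp: "\<And>a. a \<in> B \<Longrightarrow> q a > 0" using q0 by (metis order_le_less)
    have Nge: "\<And>a. real (n a) \<le> N" unfolding N_def
      by (metis of_nat_le_iff member_le_sum finite UNIV_I zero_le)
    have pp: "\<And>a. a \<in> B \<Longrightarrow> real (n a) / N > 0"
    proof -
      fix a assume "a \<in> B"
      then have "real (n a) > 0" unfolding B_def by auto
      then show "real (n a) / N > 0" using Nge[of a] by auto
    qed
    have L: "(\<Prod>a\<in>UNIV. q a ^ n a) = (\<Prod>a\<in>B. q a ^ n a)" unfolding B_def by (rule prod_supp)
    have R: "(\<Prod>a\<in>UNIV. (real (n a) / N) ^ n a) = (\<Prod>a\<in>B. (real (n a) / N) ^ n a)"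
      unfolding B_def by (rule prod_supp)
    have lpos: "(\<Prod>a\<in>B. q a ^ n a) > 0" using qp by (intro prod_pos) auto
    have rpos: "(\<Prod>a\<in>B. (real (n a) / N) ^ n a) > 0" using pp by (intro prod_pos) auto
    have lnL: "ln (\<Prod>a\<in>B. q a ^ n a) = (\<Sum>a\<in>B. real (n a) * ln (q a))"
      using qp by (subst ln_prod) (auto simp: ln_realpow dest: qp)
    have lnR: "ln (\<Prod>a\<in>B. (real (n a) / N) ^ n a) = (\<Sum>a\<in>B. real (n a) * ln (real (n a) / N))"
      using pp by (subst ln_prod) (auto simp: ln_realpow dest: pp)
    have step: "real (n a) * ln (q a) - real (n a) * ln (real (n a) / N) \<le> N * q a - real (n a)"
      if a: "a \<in> B" for a
    proof -
      have na: "real (n a) > 0" using a unfolding B_def by auto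
      have x: "q a / (real (n a) / N) > 0" using qp[OF a] pp[OF a] by (rule divide_pos_pos)
      have "real (n a) * ln (q a) - real (n a) * ln (real (n a) / N)
            = real (n a) * ln (q a / (real (n a) / N))"
        using ln_divide_pos[OF qp[OF a] pp[OF a]] by (simp add: right_diff_distrib)
      also have "\<dots> \<le> real (n a) * (q a / (real (n a) / N) - 1)"
        using ln_le_minus_one[OF x] na by (intro mult_left_mono) auto
      also have "\<dots> = N * q a - real (n a)" using na by (simp add: field_simps)
      finally show ?thesis .
    qed
    have "(\<Sum>a\<in>B. real (n a) * ln (q a)) - (\<Sum>a\<in>B. real (n a) * ln (real (n a) / N))
        \<le> (\<Sum>a\<in>B. N * q a - real (n a))"
      unfolding sum_subtractf[symmetric] by (rule sum_mono) (rule step)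
    also have "\<dots> = N * (\<Sum>a\<in>B. q a) - (\<Sum>a\<in>B. real (n a))"
      by (simp add: sum_subtractf sum_distrib_left)
    also have "(\<Sum>a\<in>B. real (n a)) = N"
    proof -
      have "(\<Sum>a\<in>B. real (n a)) = (\<Sum>a\<in>UNIV. real (n a))"
        unfolding B_def by (rule sum.mono_neutral_left) auto
      then show ?thesis unfolding N_def by simp
    qed
    also have "N * (\<Sum>a\<in>B. q a) \<le> N * 1"
    proof -
      have "(\<Sum>a\<in>B. q a) \<le> sum q UNIV" by (rule sum_mono2) (auto simp: q0)
      then show ?thesis using q1 by (intro mult_left_mono) (auto simp: N_def intro: sum_nonneg)
    qed
    finally have "ln (\<Prod>a\<in>B. q a ^ n a) \<le> ln (\<Prod>a\<in>B. (real (n a) / N) ^ n a)"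
      using lnL lnR by simp
    then have "(\<Prod>a\<in>B. q a ^ n a) \<le> (\<Prod>a\<in>B. (real (n a) / N) ^ n a)"
      using lpos rpos by simp
    then show ?thesis using L R unfolding N_def by simp
  qed
qed

definition Fnode :: "(nat \<Rightarrow> 'a::finite) \<Rightarrow> (nat \<Rightarrow> nat) \<Rightarrow> nat \<Rightarrow> 'a list \<Rightarrow> real" where
  "Fnode X d n w = (\<Prod>a\<in>UNIV. phat X d n a w ^ Ncount X d n (w @ [a]))"

lemma lik_Fnode: "likelihood X d n \<tau> = prod (Fnode X d n) \<tau>"
  unfolding likelihood_def Fnode_def by simp

lemma Fnode_pos: "Fnode X d n w > 0"
  unfolding Fnode_def
proof (rule prod_pos)
  fix a :: 'a
  show "0 < phat X d n a w ^ Ncount X d n (w @ [a])"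
  proof (cases "Ncount X d n (w @ [a]) = 0")
    case False
    have "Ncount X d n (w @ [a]) \<le> Ntot X d n w" unfolding Ntot_def by (rule member_le_sum) auto
    then have "phat X d n a w > 0" using False unfolding phat_def by auto
    then show ?thesis by simp
  qed simp
qed

lemma lik_pos: "likelihood X d n \<tau> > 0"
  unfolding lik_Fnode by (rule prod_pos) (simp add: Fnode_pos)

context
  fixes X :: "nat \<Rightarrow> 'a::finite" and d n and t1 t2 :: "'a list set"
  assumes c1: "candP X d n t1" and c2: "candP X d n t2"
begin

lemma group_F:
  assumes w1: "w \<in> t1" and wn2: "w \<notin> t2" and v0: "v0 \<in> t2" "strict_suffix w v0"
  shows "Fnode X d n w \<le> (\<Prod>z\<in>{z\<in>t2. strict_suffix w z}. Fnode X d n z)"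
proof -
  let ?G = "{z\<in>t2. strict_suffix w z}"
  let ?N = "\<lambda>v a. Ncount X d n (v @ [a])"
  define q where "q a = phat X d n a w" for a
  have q0: "\<And>a. q a \<ge> 0" unfolding q_def phat_def by simp
  have q1: "sum q UNIV \<le> 1"
  proof -
    have "sum q UNIV = (\<Sum>a\<in>UNIV. real (?N w a)) / real (Ntot X d n w)"
      unfolding q_def phat_def by (simp add: sum_divide_distrib)
    also have "\<dots> = real (Ntot X d n w) / real (Ntot X d n w)" unfolding Ntot_def by simp
    also have "\<dots> \<le> 1" by (cases "Ntot X d n w = 0") auto
    finally show ?thesis .
  qed
  have finG: "finite ?G" using c2 unfolding candP_def by auto
  have "Fnode X d n w = (\<Prod>a\<in>UNIV. q a ^ (\<Sum>z\<in>?G. ?N z a))"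
    unfolding Fnode_def q_def using group_count[OF c1 c2 assms] by simp
  also have "\<dots> = (\<Prod>a\<in>UNIV. \<Prod>z\<in>?G. q a ^ ?N z a)" by (simp add: power_sum)
  also have "\<dots> = (\<Prod>z\<in>?G. \<Prod>a\<in>UNIV. q a ^ ?N z a)" by (rule prod.swap)
  also have "\<dots> \<le> (\<Prod>z\<in>?G. Fnode X d n z)"
  proof (rule prod_mono)
    fix z assume "z \<in> ?G"
    show "0 \<le> (\<Prod>a\<in>UNIV. q a ^ ?N z a) \<and> (\<Prod>a\<in>UNIV. q a ^ ?N z a) \<le> Fnode X d n z"
    proof
      show "0 \<le> (\<Prod>a\<in>UNIV. q a ^ ?N z a)" using q0 by (intro prod_nonneg) auto
      show "(\<Prod>a\<in>UNIV. q a ^ ?N z a) \<le> Fnode X d n z"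
        using gibbs[of q "\<lambda>a. ?N z a", OF q0 q1] unfolding Fnode_def phat_def Ntot_def by simp
    qed
  qed
  finally show ?thesis .
qed

lemma lik_meet_le: "likelihood X d n (meetT t1 t2) \<le> likelihood X d n t2"
proof -
  let ?M = "meetT t1 t2"
  let ?F = "Fnode X d n"
  let ?G = "\<lambda>w. {z\<in>t2. strict_suffix w z}"
  have f1: "finite t1" and f2: "finite t2" using c1 c2 unfolding candP_def by auto
  have fM: "finite ?M" using M_cand[OF c1 c2] unfolding candP_def by auto
  have Mw: "w \<in> t1 \<and> (\<exists>v0\<in>t2. strict_suffix w v0)" if "w \<in> ?M - t2" for w
    using that unfolding meetT_def strict_suffix_def by blast
  have U: "t2 - ?M = (\<Union>w\<in>?M - t2. ?G w)"
  proof (intro equalityI subsetI)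
    fix z assume z: "z \<in> t2 - ?M"
    obtain v where v: "v \<in> t1" "strict_suffix v z \<or> v = z \<or> strict_suffix z v"
      using rel21[OF c1 c2, of z] z by blast
    have vz: "strict_suffix v z" using v z unfolding meetT_def strict_suffix_def by blast
    have "v \<in> ?M" using vz v z unfolding meetT_def strict_suffix_def by blast
    moreover have "v \<notin> t2" using sf2[OF c1 c2] vz z by blast
    ultimately show "z \<in> (\<Union>w\<in>?M - t2. ?G w)" using vz z by blast
  next
    fix z assume "z \<in> (\<Union>w\<in>?M - t2. ?G w)"
    then obtain w where w: "w \<in> ?M - t2" "z \<in> t2" "strict_suffix w z" by blast
    have w1: "w \<in> t1" using Mw[OF w(1)] by blast
    have "z \<notin> ?M"
    proof
      assume "z \<in> ?M"
      then have "z \<in> t1 \<or> (\<exists>u\<in>t1. strict_suffix z u)" unfolding meetT_def by blast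
      then show False using sf1[OF c1 c2] w1 w suffix_order.less_trans by blast
    qed
    then show "z \<in> t2 - ?M" using w by blast
  qed
  have disj: "\<forall>i\<in>?M - t2. \<forall>j\<in>?M - t2. i \<noteq> j \<longrightarrow> ?G i \<inter> ?G j = {}"
  proof (intro ballI impI equals0I)
    fix i j z assume ij: "i \<in> ?M - t2" "j \<in> ?M - t2" "i \<noteq> j" and z: "z \<in> ?G i \<inter> ?G j"
    have "i \<in> t1" "j \<in> t1" using Mw ij by blast+
    moreover have "suffix i j \<or> suffix j i" using z suffix_same_cases unfolding strict_suffix_def by blast
    ultimately show False using sf1[OF c1 c2] ij unfolding strict_suffix_def by blast
  qed
  have "prod ?F (t2 - ?M) = (\<Prod>w\<in>?M - t2. prod ?F (?G w))"
    unfolding U by (rule prod.UNION_disjoint) (use fM f2 disj in auto)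
  moreover have "prod ?F (?M - t2) \<le> (\<Prod>w\<in>?M - t2. prod ?F (?G w))"
  proof (rule prod_mono)
    fix w assume w: "w \<in> ?M - t2"
    then obtain v0 where "v0 \<in> t2" "strict_suffix w v0" "w \<in> t1" using Mw by blast
    then show "0 \<le> ?F w \<and> ?F w \<le> prod ?F (?G w)"
      using group_F w Fnode_pos[of X d n w] by auto
  qed
  ultimately have le: "prod ?F (?M - t2) \<le> prod ?F (t2 - ?M)" by simp
  have "prod ?F ?M = prod ?F (?M \<inter> t2) * prod ?F (?M - t2)"
    using fM by (metis prod.Int_Diff)
  also have "\<dots> \<le> prod ?F (?M \<inter> t2) * prod ?F (t2 - ?M)"
    using le by (intro mult_left_mono prod_nonneg) (auto intro: less_imp_le Fnode_pos)
  also have "\<dots> = prod ?F t2"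
    using f2 by (metis prod.Int_Diff Int_commute)
  finally show ?thesis unfolding lik_Fnode .
qed

end



theorem mainTheorem5:
  fixes X :: "nat \<Rightarrow> 'a::finite" and d :: "nat \<Rightarrow> nat" and chi :: "'a list \<Rightarrow> bool"
    and n :: nat and c1 c2 :: real
  assumes "filterlim d at_top at_top"
    and "consistent_incidence chi"
    and "0 < c1" and "c1 < c2"
    and "\<exists>!\<tau>. is_bic_max X d chi n c1 \<tau>"
    and "\<exists>!\<tau>. is_bic_max X d chi n c2 \<tau>"
  shows "tree_le (tau_bic X d chi n c2) (tau_bic X d chi n c1)"
proof -
  obtain t1 where h1: "is_bic_max X d chi n c1 t1" and u1: "\<And>t. is_bic_max X d chi n c1 t \<Longrightarrow> t = t1"
    using assms(5) by blast
  obtain t2 where h2: "is_bic_max X d chi n c2 t2" and u2: "\<And>t. is_bic_max X d chi n c2 t \<Longrightarrow> t = t2"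
    using assms(6) by blast
  have e1: "tau_bic X d chi n c1 = t1" unfolding tau_bic_def using h1 u1 by (rule the_equality)
  have e2: "tau_bic X d chi n c2 = t2" unfolding tau_bic_def using h2 u2 by (rule the_equality)
  have k1: "candP X d n t1" using h1 cand_iff unfolding is_bic_max_def by blast
  have k2: "candP X d n t2" using h2 cand_iff unfolding is_bic_max_def by blast
  define J where "J = joinT t1 t2"
  define M where "M = meetT t1 t2"
  have kJ: "J \<in> cand_trees X d n" using J_cand[OF k1 k2] cand_iff unfolding J_def by blast
  have kM: "M \<in> cand_trees X d n" using M_cand[OF k1 k2] cand_iff unfolding M_def by blast
  have f1: "finite t1" and f2: "finite t2" using k1 k2 unfolding candP_def by auto
  have fJ: "finite J" and fM: "finite M" using J_cand[OF k1 k2] M_cand[OF k1 k2]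
    unfolding candP_def J_def M_def by auto
  let ?F = "Fnode X d n"
  let ?L = "\<lambda>t. likelihood X d n t"
  let ?D = "\<lambda>t. real (df chi t)"
  have "?L J * ?L M = ?L t1 * ?L t2"
  proof -
    have "?L J * ?L M = prod ?F (J \<union> M) * prod ?F (J \<inter> M)"
      unfolding lik_Fnode using prod.union_inter[OF fJ fM, of ?F] by simp
    also have "\<dots> = prod ?F (t1 \<union> t2) * prod ?F (t1 \<inter> t2)"
      unfolding J_def M_def JM_union[OF k1 k2] JM_inter[OF k1 k2] ..
    also have "\<dots> = ?L t1 * ?L t2" unfolding lik_Fnode using prod.union_inter[OF f1 f2, of ?F] by simp
    finally show ?thesis .
  qed
  then have lnmod: "ln (?L J) + ln (?L M) = ln (?L t1) + ln (?L t2)"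
    using lik_pos by (metis ln_mult_pos)
  have "df chi J + df chi M = df chi t1 + df chi t2"
  proof -
    let ?g = "\<lambda>w. card {a. chi (w @ [a])}"
    have "df chi J + df chi M = sum ?g (J \<union> M) + sum ?g (J \<inter> M)"
      unfolding df_def using sum.union_inter[OF fJ fM, of ?g] by simp
    also have "\<dots> = sum ?g (t1 \<union> t2) + sum ?g (t1 \<inter> t2)"
      unfolding J_def M_def JM_union[OF k1 k2] JM_inter[OF k1 k2] ..
    also have "\<dots> = df chi t1 + df chi t2" unfolding df_def using sum.union_inter[OF f1 f2, of ?g] by simp
    finally show ?thesis .
  qed
  then have dmod: "?D J + ?D M = ?D t1 + ?D t2" by (metis of_nat_add)
  have Lle: "ln (?L M) \<le> ln (?L t2)"
    using lik_meet_le[OF k1 k2] lik_pos unfolding M_def by (metis ln_le_cancel_iff)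
  have c2M: "bic_crit X d chi n c2 M \<le> bic_crit X d chi n c2 t2" using h2 kM unfolding is_bic_max_def by blast
  define l where "l = ln (real n)"
  have l0: "l \<ge> 0" unfolding l_def by (cases n) auto
  define p where "p = (?D t2 - ?D M) * l"
  have key: "c1 * p \<le> ln (?L t2) - ln (?L M)"
  proof (cases "?D t2 - ?D M \<ge> 0")
    case True
    then have "p \<ge> 0" unfolding p_def using l0 by simp
    then have "c1 * p \<le> c2 * p" using assms(4) by (intro mult_right_mono) auto
    moreover have "c2 * p \<le> ln (?L t2) - ln (?L M)"
      using c2M unfolding bic_crit_def p_def l_def by (simp add: algebra_simps)
    ultimately show ?thesis by linarith
  next
    case False
    then have "p \<le> 0" unfolding p_def using l0 by (simp add: mult_nonpos_nonneg)
    then have "c1 * p \<le> 0" using assms(3) by (simp add: mult_nonneg_nonpos)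
    then show ?thesis using Lle by linarith
  qed
  have "bic_crit X d chi n c1 t1 \<le> bic_crit X d chi n c1 J"
  proof -
    have eqJ: "?D J = ?D t1 + ?D t2 - ?D M" using dmod by linarith
    have eqL: "ln (?L J) = ln (?L t1) + ln (?L t2) - ln (?L M)" using lnmod by linarith
    have "bic_crit X d chi n c1 J - bic_crit X d chi n c1 t1 = (ln (?L t2) - ln (?L M)) - c1 * p"
      unfolding bic_crit_def p_def l_def eqJ eqL by (simp add: algebra_simps)
    then show ?thesis using key by linarith
  qed
  then have "is_bic_max X d chi n c1 J"
    using h1 kJ unfolding is_bic_max_def by fastforce
  then have "J = t1" by (rule u1)
  moreover have "tree_le t2 J"
    unfolding tree_le_def J_def joinT_def strict_suffix_def by blast
  ultimately show ?thesis using e1 e2 by simp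
qed

end
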